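(* Let $t_n=n(\log n)^{3/4}$. Then $$\lim_{n\to\infty}\frac{T_n^{t_n}}{\mathbb E(T_n^{t_n})}=1\quad\lambda\text{-almost surely}.$$
   Context: Let $\lambda$ be Lebesgue measure on $[0,1)$, $\tau(x)=2x\bmod1$, $\chi(x)=\lfloor1/x\rfloor$, $a_n=\chi\circ\tau^{n-1}$. For $r\ge1$ define $a_i^r=a_i\mathbb 1_{\{a_i\le r\}}$ and $T_n^r=\sum_{i=1}^n a_i^r$. Expectations are with respect to $\lambda$; logarithms are natural. *)

theory Defs
  imports "HOL-Probability.Probability"
begin

definition lam :: "real measure" where
  "lam = restrict_space lborel {0..<1}"

definition tau :: "real \<Rightarrow> real" where
  "tau x = frac (2 * x)"

text \<open>chi(x) = floor(1/x) (for x = 0 this gives 0 by 1/0 = 0; a null set).\<close>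
definition chi :: "real \<Rightarrow> real" where
  "chi x = of_int \<lfloor>1 / x\<rfloor>"

definition digit :: "nat \<Rightarrow> real \<Rightarrow> real" where
  "digit n x = chi ((tau ^^ (n - 1)) x)"

definition trunc_digit :: "real \<Rightarrow> nat \<Rightarrow> real \<Rightarrow> real" where
  "trunc_digit r i x = (if digit i x \<le> r then digit i x else 0)"

definition T :: "nat \<Rightarrow> real \<Rightarrow> real \<Rightarrow> real" where
  "T n r x = (\<Sum>i=1..n. trunc_digit r i x)"

definition t_seq :: "nat \<Rightarrow> real" where
  "t_seq n = real n * (ln (real n)) powr (3/4)"

end

theory Submission
  imports Defs "HOL-Real_Asymp.Real_Asymp"
begin


lemma prob_lam: "prob_space lam"
  unfolding lam_def by (rule prob_space_restrict_space) auto

lemma space_lam[simp]: "space lam = {0..<1}"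
  unfolding lam_def by (simp add: space_restrict_space)

lemma chi_meas[measurable]: "chi \<in> borel_measurable borel"
  unfolding chi_def by measurable

lemma tau_meas[measurable]: "tau \<in> borel_measurable borel"
  unfolding tau_def frac_def by measurable

lemma taun_meas[measurable]: "(tau ^^ n) \<in> borel_measurable borel"
  by (induction n) auto

lemma meas_lam: "f \<in> borel_measurable borel \<Longrightarrow> f \<in> borel_measurable lam"
  unfolding lam_def by (simp add: measurable_restrict_space1)

lemma tau_range: "tau x \<in> {0..<1}"
  unfolding tau_def by (simp add: frac_lt_1)


interpretation L: prob_space lam by (rule prob_lam)

definition bm :: "(real \<Rightarrow> real) \<Rightarrow> bool" where
  "bm F \<longleftrightarrow> F \<in> borel_measurable borel \<and> (\<exists>B. \<forall>x\<in>{0..<1}. \<bar>F x\<bar> \<le> B)"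

lemma tau_ge0[simp]: "0 \<le> tau x" and tau_lt1[simp]: "tau x < 1"
  using tau_range[of x] by auto

lemma bm_integrable: "bm F \<Longrightarrow> integrable lam F"
proof -
  assume "bm F"
  then obtain B where G: "F \<in> borel_measurable borel" "\<forall>x\<in>{0..<1}. \<bar>F x\<bar> \<le> B"
    unfolding bm_def by auto
  show ?thesis
    by (rule L.integrable_const_bound[where B=B]) (use G in \<open>auto intro!: meas_lam\<close>)
qed

lemma integral_lam: "integral\<^sup>L lam (f::real\<Rightarrow>real) = (\<integral>x. indicator {0..<1} x * f x \<partial>lborel)"
  unfolding lam_def by (subst integral_restrict_space) auto

lemma subst_lo: fixes h :: "real \<Rightarrow> real" shows "(\<integral>y. indicator {0..<1/2} y * h y \<partial>lam) = (1/2) * (\<integral>z. h (z/2) \<partial>lam)"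
proof -
  have "(\<integral>y. indicator {0..<1/2} y * h y \<partial>lam) = (\<integral>y. indicator {0..<1} y * (indicator {0..<1/2} y * h y) \<partial>lborel)"
    by (simp add: integral_lam)
  also have "\<dots> = \<bar>1/2\<bar> *\<^sub>R (\<integral>z. indicator {0..<1} (0 + 1/2*z) * (indicator {0..<1/2} (0+1/2*z) * h (0+1/2*z)) \<partial>lborel)"
    by (rule lborel_integral_real_affine) simp
  also have "(\<lambda>z. indicator {0..<1} (0 + 1/2*z) * (indicator {0..<1/2} (0+1/2*z) * h (0+1/2*z))) = (\<lambda>z. indicator {0..<1} z * h (z/2)::real)"
    by (auto simp: indicator_def fun_eq_iff)
  finally show ?thesis by (simp add: integral_lam)
qed

lemma subst_hi: fixes h :: "real \<Rightarrow> real" shows "(\<integral>y. indicator {1/2..<1} y * h y \<partial>lam) = (1/2) * (\<integral>z. h ((z+1)/2) \<partial>lam)"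
proof -
  have "(\<integral>y. indicator {1/2..<1} y * h y \<partial>lam) = (\<integral>y. indicator {0..<1} y * (indicator {1/2..<1} y * h y) \<partial>lborel)"
    by (simp add: integral_lam)
  also have "\<dots> = \<bar>1/2\<bar> *\<^sub>R (\<integral>z. indicator {0..<1} (1/2 + 1/2*z) * (indicator {1/2..<1} (1/2+1/2*z) * h (1/2+1/2*z)) \<partial>lborel)"
    by (rule lborel_integral_real_affine) simp
  also have "(\<lambda>z. indicator {0..<1} (1/2 + 1/2*z) * (indicator {1/2..<1} (1/2+1/2*z) * h (1/2+1/2*z))) = (\<lambda>z. indicator {0..<1} z * h ((z+1)/2)::real)"
  proof (rule ext)
    fix z :: real
    have e: "1/2 + 1/2*z = (z+1)/2" by simp
    show "indicator {0..<1} (1/2 + 1/2*z) * (indicator {1/2..<1} (1/2+1/2*z) * h (1/2+1/2*z)) = indicator {0..<1} z * h ((z+1)/2)"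
      unfolding e by (auto simp: indicator_def)
  qed
  finally show ?thesis by (simp add: integral_lam)
qed

definition Pop :: "(real \<Rightarrow> real) \<Rightarrow> real \<Rightarrow> real" where
  "Pop F z = (F (z/2) + F ((z+1)/2)) / 2"

lemma bm_mult: "bm F \<Longrightarrow> bm G \<Longrightarrow> bm (\<lambda>x. F x * G x)"
  unfolding bm_def
proof (elim conjE exE, intro conjI)
  fix A B assume "\<forall>x\<in>{0..<1}. \<bar>F x\<bar> \<le> A" "\<forall>x\<in>{0..<1}. \<bar>G x\<bar> \<le> B"
    "F \<in> borel_measurable borel" "G \<in> borel_measurable borel"
  then show "(\<lambda>x. F x * G x) \<in> borel_measurable borel" by measurable
  show "\<exists>B. \<forall>x\<in>{0..<1}. \<bar>F x * G x\<bar> \<le> B"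
    using \<open>\<forall>x\<in>{0..<1}. \<bar>F x\<bar> \<le> A\<close> \<open>\<forall>x\<in>{0..<1}. \<bar>G x\<bar> \<le> B\<close>
    by (intro exI[of _ "A*B"]) (auto simp: abs_mult intro!: mult_mono)
qed

lemma bm_comp_tau: "bm G \<Longrightarrow> bm (\<lambda>x. G ((tau ^^ n) x))"
proof -
  assume "bm G"
  then obtain B where G: "G \<in> borel_measurable borel" "\<forall>x\<in>{0..<1}. \<bar>G x\<bar> \<le> B"
    unfolding bm_def by auto
  have r: "x \<in> {0..<1} \<Longrightarrow> (tau ^^ n) x \<in> {0..<1}" for x
    by (cases n) (auto simp: tau_range)
  show ?thesis unfolding bm_def using G r by (auto intro!: exI[of _ B])
qed

lemma bm_Pop: "bm F \<Longrightarrow> bm (Pop F)"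
proof -
  assume "bm F"
  then obtain B where G: "F \<in> borel_measurable borel" "\<forall>x\<in>{0..<1}. \<bar>F x\<bar> \<le> B"
    unfolding bm_def by auto
  have "Pop F \<in> borel_measurable borel" unfolding Pop_def[abs_def] using G(1) by measurable
  moreover have "\<bar>Pop F x\<bar> \<le> B" if "x \<in> {0..<1}" for x
  proof -
    have "\<bar>F (x/2)\<bar> \<le> B" "\<bar>F ((x+1)/2)\<bar> \<le> B" using G(2) that by auto
    then show ?thesis unfolding Pop_def by (simp only: abs_le_iff) (auto simp: field_simps)
  qed
  ultimately show ?thesis unfolding bm_def by blast
qed

lemma bm_half: assumes "bm F" shows "bm (\<lambda>z. F (z/2))" "bm (\<lambda>z. F ((z+1)/2))"
proof -
  obtain B where G: "F \<in> borel_measurable borel" "\<forall>x\<in>{0..<1}. \<bar>F x\<bar> \<le> B"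
    using assms unfolding bm_def by auto
  have "(\<lambda>z. F (z/2)) \<in> borel_measurable borel" "(\<lambda>z. F ((z+1)/2)) \<in> borel_measurable borel"
    using G(1) by measurable
  moreover have "\<forall>x\<in>{0..<1}. \<bar>F (x/2)\<bar> \<le> B" "\<forall>x\<in>{0..<1}. \<bar>F ((x+1)/2)\<bar> \<le> B"
    using G(2) by auto
  ultimately show "bm (\<lambda>z. F (z/2))" "bm (\<lambda>z. F ((z+1)/2))" unfolding bm_def by blast+
qed

lemma bm_Popn: "bm F \<Longrightarrow> bm ((Pop ^^ n) F)"
  by (induction n) (auto intro: bm_Pop)

lemma bm_const: "bm (\<lambda>x. c)"
  unfolding bm_def by auto

lemma transfer1:
  assumes F: "bm F" and G: "bm G"
  shows "(\<integral>y. F y * G (tau y) \<partial>lam) = (\<integral>z. Pop F z * G z \<partial>lam)"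
proof -
  let ?h = "\<lambda>y. F y * G (tau y)"
  have hb: "bm ?h" using bm_mult[OF F bm_comp_tau[OF G, of 1]] by simp
  have "(\<integral>y. ?h y \<partial>lam) = (\<integral>y. indicator {0..<1/2} y * ?h y + indicator {1/2..<1} y * ?h y \<partial>lam)"
    by (rule Bochner_Integration.integral_cong) (auto simp: indicator_def)
  also have "\<dots> = (\<integral>y. indicator {0..<1/2} y * ?h y \<partial>lam) + (\<integral>y. indicator {1/2..<1} y * ?h y \<partial>lam)"
    by (rule Bochner_Integration.integral_add; rule bm_integrable; rule bm_mult[OF _ hb];
        auto simp: bm_def indicator_def intro!: exI[of _ 1])
  also have "\<dots> = (1/2) * (\<integral>z. F (z/2) * G z \<partial>lam) + (1/2) * (\<integral>z. F ((z+1)/2) * G z \<partial>lam)"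
  proof -
    have "(\<integral>z. ?h (z/2) \<partial>lam) = (\<integral>z. F (z/2) * G z \<partial>lam)"
      by (rule Bochner_Integration.integral_cong) (auto simp: tau_def frac_eq)
    moreover have "(\<integral>z. ?h ((z+1)/2) \<partial>lam) = (\<integral>z. F ((z+1)/2) * G z \<partial>lam)"
    proof (rule Bochner_Integration.integral_cong)
      fix z assume "z \<in> space lam"
      have e: "2*((z+1)/2) = 1 + z" by simp
      then have "tau ((z+1)/2) = z" unfolding tau_def e
        using \<open>z \<in> space lam\<close> frac_eq[of z] frac_1_eq[of z] by (auto simp: add.commute)
      then show "?h ((z+1)/2) = F ((z+1)/2) * G z" by simp
    qed simp
    ultimately show ?thesis by (simp add: subst_lo subst_hi)
  qed
  also have "\<dots> = (\<integral>z. Pop F z * G z \<partial>lam)"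
  proof -
    have i1: "integrable lam (\<lambda>z. F (z/2) * G z)" and i2: "integrable lam (\<lambda>z. F ((z+1)/2) * G z)"
      using bm_mult[OF bm_half(1)[OF F] G] bm_mult[OF bm_half(2)[OF F] G] by (auto intro: bm_integrable)
    have "(\<integral>z. Pop F z * G z \<partial>lam) = (\<integral>z. (1/2) * (F (z/2) * G z) + (1/2) * (F ((z+1)/2) * G z) \<partial>lam)"
      by (rule Bochner_Integration.integral_cong) (auto simp: Pop_def field_simps)
    also have "\<dots> = (1/2) * (\<integral>z. F (z/2) * G z \<partial>lam) + (1/2) * (\<integral>z. F ((z+1)/2) * G z \<partial>lam)"
      using i1 i2 by simp
    finally show ?thesis by simp
  qed
  finally show ?thesis .
qed


lemma transfer:
  assumes "bm F" "bm G"
  shows "(\<integral>y. F y * G ((tau ^^ d) y) \<partial>lam) = (\<integral>z. (Pop ^^ d) F z * G z \<partial>lam)"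
  using assms(1)
proof (induction d arbitrary: F)
  case 0 then show ?case by simp
next
  case (Suc d)
  have "(\<integral>y. F y * G ((tau ^^ Suc d) y) \<partial>lam) = (\<integral>y. F y * (\<lambda>x. G ((tau ^^ d) x)) (tau y) \<partial>lam)"
    by (simp add: funpow_Suc_right del: funpow.simps)
  also have "\<dots> = (\<integral>z. Pop F z * G ((tau ^^ d) z) \<partial>lam)"
    by (rule transfer1[OF Suc.prems bm_comp_tau[OF assms(2)]])
  also have "\<dots> = (\<integral>z. (Pop ^^ d) (Pop F) z * G z \<partial>lam)"
    by (rule Suc.IH[OF bm_Pop[OF Suc.prems]])
  finally show ?case by (simp add: funpow_Suc_right del: funpow.simps)
qed

lemma Pop_const: "(Pop ^^ d) (\<lambda>_. c) = (\<lambda>_. c)"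
  by (induction d) (auto simp: Pop_def[abs_def])

lemma stationary:
  assumes "bm G"
  shows "(\<integral>y. G ((tau ^^ d) y) \<partial>lam) = (\<integral>z. G z \<partial>lam)"
  using transfer[OF bm_const[of 1] assms, of d] by (simp add: Pop_const)

lemma Pop_int:
  assumes "bm F"
  shows "(\<integral>z. (Pop ^^ d) F z \<partial>lam) = (\<integral>z. F z \<partial>lam)"
  using transfer[OF assms bm_const[of 1], of d] by simp

lemma Pop_diff: "(Pop ^^ d) (\<lambda>y. F y - G y) = (\<lambda>z. (Pop ^^ d) F z - (Pop ^^ d) G z)"
proof (induction d arbitrary: F G)
  case 0 then show ?case by simp
next
  case (Suc d)
  have "Pop (\<lambda>y. F y - G y) = (\<lambda>y. Pop F y - Pop G y)"
    by (auto simp: Pop_def[abs_def] field_simps)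
  then show ?case using Suc.IH[of "Pop F" "Pop G"] by (simp add: funpow_Suc_right del: funpow.simps)
qed

lemma Pop_cong:
  assumes "\<And>y. y \<in> {0..<1} \<Longrightarrow> F y = H y" "z \<in> {0..<1}"
  shows "(Pop ^^ d) F z = (Pop ^^ d) H z"
  using assms
proof (induction d arbitrary: F H z)
  case 0 then show ?case by simp
next
  case (Suc d)
  have "\<And>y. y \<in> {0..<1} \<Longrightarrow> Pop F y = Pop H y"
    using Suc.prems(1) by (auto simp: Pop_def)
  then show ?case using Suc.IH[of "Pop F" "Pop H" z] Suc.prems(2)
    by (simp add: funpow_Suc_right del: funpow.simps)
qed

lemma Pop_osc:
  assumes "\<And>y y'. y \<in> {0..<1} \<Longrightarrow> y' \<in> {0..<1} \<Longrightarrow> y \<le> y' \<Longrightarrow> G y' \<le> G y"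
    and "\<And>y. y \<in> {0..<1} \<Longrightarrow> B \<le> G y \<and> G y \<le> A"
    and "z \<in> {0..<1}" "w \<in> {0..<1}"
  shows "(Pop ^^ d) G z - (Pop ^^ d) G w \<le> (A - B) / 2 ^ d"
  using assms
proof (induction d arbitrary: G A B)
  case 0
  have "G z \<le> A" "B \<le> G w" using "0.prems"(2)[of z] "0.prems"(2)[of w] "0.prems"(3,4) by auto
  then show ?case by simp
next
  case (Suc d)
  let ?P = "Pop G"
  let ?A = "(A + G (1/2)) / 2" and ?B = "(G (1/2) + B) / 2"
  have mono: "?P y' \<le> ?P y" if "y \<in> {0..<1}" "y' \<in> {0..<1}" "y \<le> y'" for y y'
  proof -
    have "G (y'/2) \<le> G (y/2)" "G ((y'+1)/2) \<le> G ((y+1)/2)"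
      using Suc.prems(1) that by auto
    then show ?thesis unfolding Pop_def by simp
  qed
  have bnd: "?B \<le> ?P y \<and> ?P y \<le> ?A" if "y \<in> {0..<1}" for y
  proof -
    have "G (y/2) \<le> A" "B \<le> G ((y+1)/2)" using Suc.prems(2)[of "y/2"] Suc.prems(2)[of "(y+1)/2"] that by auto
    moreover have "G (1/2) \<le> G (y/2)" "G ((y+1)/2) \<le> G (1/2)" using Suc.prems(1) that by auto
    ultimately show ?thesis unfolding Pop_def by auto
  qed
  have "(Pop ^^ d) ?P z - (Pop ^^ d) ?P w \<le> (?A - ?B) / 2 ^ d"
    by (rule Suc.IH[OF mono bnd]) (use Suc.prems in auto)
  also have "(?A - ?B) / 2 ^ d = (A - B) / 2 ^ Suc d" by (simp add: field_simps)
  finally show ?case by (simp add: funpow_Suc_right del: funpow.simps)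
qed


definition fK :: "nat \<Rightarrow> real \<Rightarrow> real" where
  "fK K y = (if chi y \<le> real K then chi y else 0)"

lemma chi_nonneg: "y \<in> {0..<1} \<Longrightarrow> 0 \<le> chi y"
  unfolding chi_def by auto

lemma fK_meas[measurable]: "fK K \<in> borel_measurable borel"
  unfolding fK_def[abs_def] by measurable

lemma fK_bnd: "y \<in> {0..<1} \<Longrightarrow> 0 \<le> fK K y \<and> fK K y \<le> real K"
  using chi_nonneg[of y] unfolding fK_def by auto

lemma bm_fK: "bm (fK K)"
  unfolding bm_def using fK_bnd by (auto intro!: exI[of _ "real K"])

lemma level_set:
  assumes "k \<ge> 1"
  shows "{y\<in>{0..<1}. chi y = real k} = {1/(real k+1)<..1/real k} \<inter> {..<1}"
proof (intro set_eqI iffI)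
  fix y assume y: "y \<in> {y\<in>{0..<1}. chi y = real k}"
  then have f: "\<lfloor>1/y\<rfloor> = int k" unfolding chi_def by simp
  then have y0: "y > 0" using y assms by (cases "y = 0") auto
  have "real k \<le> 1/y" "1/y < real k + 1" using f by linarith+
  then show "y \<in> {1/(real k+1)<..1/real k} \<inter> {..<1}" using y0 y assms
    by (auto simp: field_simps)
next
  fix y assume y: "y \<in> {1/(real k+1)<..1/real k} \<inter> {..<1}"
  have kp: "real k > 0" using assms by simp
  have y0: "y > 0" using y kp
    by (smt (verit) divide_pos_pos greaterThanAtMost_iff Int_iff)
  have y1: "y < 1" using y by auto
  have "real k \<le> 1/y" using y y0 kp by (auto simp: field_simps)
  moreover have "1/y < real k + 1" using y y0 kp by (auto simp: field_simps)
  ultimately have "\<lfloor>1/y\<rfloor> = int k" by (simp add: floor_eq_iff)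
  then show "y \<in> {y\<in>{0..<1}. chi y = real k}" using y0 y1 unfolding chi_def by auto
qed

lemma measure_level:
  assumes "k \<ge> 1"
  shows "measure lam {y\<in>space lam. chi y = real k} = 1/real k - 1/(real k + 1)"
proof -
  have kp: "real k > 0" using assms by simp
  let ?S = "{1/(real k+1)<..1/real k} \<inter> {..<1}"
  have sub: "?S \<subseteq> {0..<1}"
    using assms kp by (auto simp: field_simps)
  have "measure lam {y\<in>space lam. chi y = real k} = measure lam ?S"
    using level_set[OF assms] by simp
  also have "\<dots> = measure lborel ?S"
    unfolding lam_def by (rule measure_restrict_space) (use sub in auto)
  also have "\<dots> = 1/real k - 1/(real k + 1)"
  proof (cases "k = 1")
    case True
    then have "?S = {1/2<..<1}" by auto
    then show ?thesis using True by simp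
  next
    case False
    then have "real k \<ge> 2" using assms by simp
    then have "1/real k < 1" by simp
    then have "?S = {1/(real k+1)<..1/real k}" by auto
    moreover have le: "1/(real k+1) \<le> 1/real k" using kp by (simp add: frac_le)
    ultimately show ?thesis by simp
  qed
  finally show ?thesis .
qed

lemma int_level:
  assumes "k \<ge> 1"
  shows "(\<integral>y. (if chi y = real k then real k ^ p else 0) \<partial>lam) = real k ^ p * (1/real k - 1/(real k + 1))"
proof -
  have e: "{y\<in>space lam. chi y = real k} \<inter> space lam = {y\<in>space lam. chi y = real k}" by auto
  have "(\<integral>y. (if chi y = real k then real k ^ p else 0) \<partial>lam) = (\<integral>y. real k ^ p * indicator {y\<in>space lam. chi y = real k} y \<partial>lam)"
    by (rule Bochner_Integration.integral_cong) (auto simp: indicator_def)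
  also have "\<dots> = real k ^ p * measure lam {y\<in>space lam. chi y = real k}"
    apply simp apply (rule disjI2) apply (rule arg_cong[where f="measure lam"]) by auto
  finally show ?thesis using measure_level[OF assms] by simp
qed

lemma fK_Suc: "fK (Suc K) y ^ p = fK K y ^ p + (if chi y = real (Suc K) then real (Suc K) ^ p else 0)"
  if "p \<ge> 1" for p
proof -
  have "chi y = of_int \<lfloor>1/y\<rfloor>" by (simp add: chi_def)
  then have "chi y \<le> real (Suc K) \<longleftrightarrow> chi y \<le> real K \<or> chi y = real (Suc K)"
    by (smt (verit, ccfv_threshold) floor_of_int le_floor_iff of_int_of_nat_eq of_nat_Suc)
  then show ?thesis using that unfolding fK_def by (auto simp: power_0_left)
qed

definition mK :: "nat \<Rightarrow> real" where "mK K = (\<Sum>k<K. 1/(real k + 2))"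

lemma alg0: fixes a :: real assumes "a > 0" shows "1/a - 1/(a+1) = 1/(a*(a+1))"
proof -
  have "a \<noteq> 0" "a + 1 \<noteq> 0" using assms by linarith+
  then show ?thesis by (simp add: field_simps)
qed
lemma alg1: "real (Suc K) ^ 1 * (1 / real (Suc K) - 1 / (real (Suc K) + 1)) = 1/(real K + 2)"
proof -
  have "real (Suc K) * (1/(real (Suc K) * (real (Suc K) + 1))) = 1/(real (Suc K) + 1)" by simp
  then show ?thesis using alg0[of "real (Suc K)"] by (simp add: add.commute)
qed
lemma alg2: "real (Suc K) ^ 2 * (1 / real (Suc K) - 1 / (real (Suc K) + 1)) = (real K + 1)/(real K + 2)"
proof -
  have "real (Suc K)^2 * (1/(real (Suc K) * (real (Suc K) + 1))) = real (Suc K)/(real (Suc K) + 1)" by (simp add: power2_eq_square)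
  then show ?thesis using alg0[of "real (Suc K)"] by (simp add: add.commute)
qed

lemma fK0: "y \<in> {0..<1} \<Longrightarrow> fK 0 y = 0"
  using fK_bnd[of y 0] by auto

lemma int_fK: "(\<integral>y. fK K y \<partial>lam) = mK K"
proof (induction K)
  case 0
  have "(\<integral>y. fK 0 y \<partial>lam) = (\<integral>y. 0 \<partial>lam)"
    by (rule Bochner_Integration.integral_cong) (auto simp: fK0)
  then show ?case by (simp add: mK_def)
next
  case (Suc K)
  have "(\<integral>y. fK (Suc K) y \<partial>lam) = (\<integral>y. fK K y + (if chi y = real (Suc K) then real (Suc K) ^ 1 else 0) \<partial>lam)"
    using fK_Suc[of 1 K] by simp
  also have "\<dots> = (\<integral>y. fK K y \<partial>lam) + (\<integral>y. (if chi y = real (Suc K) then real (Suc K) ^ 1 else 0) \<partial>lam)"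
  proof (rule Bochner_Integration.integral_add)
    show "integrable lam (fK K)" by (rule bm_integrable[OF bm_fK])
    show "integrable lam (\<lambda>y. if chi y = real (Suc K) then real (Suc K) ^ 1 else 0)"
      by (rule bm_integrable) (auto simp: bm_def intro!: exI[of _ "real (Suc K)"])
  qed
  also have "\<dots> = mK K + 1/(real K + 2)"
  proof -
    have "real (Suc K) ^ 1 * (1 / real (Suc K) - 1 / (real (Suc K) + 1)) = 1/(real K + 2)"
      by (rule alg1)
    then show ?thesis using Suc.IH int_level[of "Suc K" 1] by simp
  qed
  finally show ?case by (simp add: mK_def)
qed

lemma int_fK2: "(\<integral>y. fK K y ^ 2 \<partial>lam) \<le> real K"
proof (induction K)
  case 0
  have "(\<integral>y. fK 0 y ^ 2 \<partial>lam) = (\<integral>y. 0 \<partial>lam)"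
    by (rule Bochner_Integration.integral_cong) (auto simp: fK0)
  then show ?case by simp
next
  case (Suc K)
  have "(\<integral>y. fK (Suc K) y ^ 2 \<partial>lam) = (\<integral>y. fK K y ^ 2 + (if chi y = real (Suc K) then real (Suc K) ^ 2 else 0) \<partial>lam)"
    using fK_Suc[of 2 K] by simp
  also have "\<dots> = (\<integral>y. fK K y ^ 2 \<partial>lam) + (\<integral>y. (if chi y = real (Suc K) then real (Suc K) ^ 2 else 0) \<partial>lam)"
  proof (rule Bochner_Integration.integral_add)
    show "integrable lam (\<lambda>y. fK K y ^ 2)" using bm_integrable[OF bm_mult[OF bm_fK bm_fK]] by (simp add: power2_eq_square)
    show "integrable lam (\<lambda>y. if chi y = real (Suc K) then real (Suc K) ^ 2 else 0)"
      by (rule bm_integrable) (auto simp: bm_def intro!: exI[of _ "real (Suc K) ^ 2"])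
  qed
  also have "\<dots> \<le> real K + 1"
  proof -
    have "real (Suc K) ^ 2 * (1 / real (Suc K) - 1 / (real (Suc K) + 1)) = (real K + 1)/(real K + 2)"
      by (rule alg2)
    also have "\<dots> \<le> 1" by simp
    finally have "real (Suc K) ^ 2 * (1 / real (Suc K) - 1 / (real (Suc K) + 1)) \<le> 1" .
    then show ?thesis using Suc.IH int_level[of "Suc K" 2] by simp
  qed
  finally show ?case by simp
qed


lemma prob_all[simp]: "measure lam {0..<1} = 1"
  using L.prob_space by simp

definition g1 :: "nat \<Rightarrow> real \<Rightarrow> real" where
  "g1 K y = (if y \<le> 0 then real K else min (chi y) (real K))"
definition Ii :: "nat \<Rightarrow> real \<Rightarrow> real" where
  "Ii K y = (if y \<le> 1/(real K+1) then real K else 0)"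

lemma fK_decomp:
  assumes "y \<in> {0..<1}" shows "fK K y = g1 K y - Ii K y"
proof (cases "y = 0")
  case True then show ?thesis by (simp add: fK_def g1_def Ii_def chi_def)
next
  case False
  then have y0: "y > 0" using assms by auto
  show ?thesis
  proof (cases "y \<le> 1/(real K+1)")
    case True
    then have "1/y \<ge> real K + 1" using y0 by (simp add: field_simps)
    then have "\<lfloor>1/y\<rfloor> \<ge> int K + 1" by (metis add.commute floor_mono floor_of_nat of_nat_1 of_nat_add floor_add_int of_int_of_nat_eq)
    then have "chi y \<ge> real K + 1" unfolding chi_def by linarith
    then show ?thesis using True y0 by (simp add: fK_def g1_def Ii_def)
  next
    case False
    then have "1/y < real K + 1" using y0 by (simp add: field_simps)
    then have "\<lfloor>1/y\<rfloor> \<le> int K" by linarith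
    then have "chi y \<le> real K" unfolding chi_def by linarith
    then show ?thesis using False y0 by (simp add: fK_def g1_def Ii_def)
  qed
qed

lemma g1_mono: "y \<in> {0..<1} \<Longrightarrow> y' \<in> {0..<1} \<Longrightarrow> y \<le> y' \<Longrightarrow> g1 K y' \<le> g1 K y"
proof -
  assume a: "y \<in> {0..<1}" "y' \<in> {0..<1}" "y \<le> y'"
  show ?thesis
  proof (cases "y \<le> 0")
    case True then show ?thesis by (simp add: g1_def)
  next
    case False
    then have "1/y' \<le> 1/y" using a by (simp add: frac_le)
    then have "chi y' \<le> chi y" unfolding chi_def by (simp add: floor_mono)
    then show ?thesis using False a by (auto simp: g1_def)
  qed
qed

lemma g1_bnd: "y \<in> {0..<1} \<Longrightarrow> 0 \<le> g1 K y \<and> g1 K y \<le> real K"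
  using chi_nonneg[of y] by (auto simp: g1_def)

lemma Ii_mono: "y \<le> y' \<Longrightarrow> Ii K y' \<le> Ii K y"
  by (auto simp: Ii_def)

lemma Ii_bnd: "0 \<le> Ii K y \<and> Ii K y \<le> real K"
  by (auto simp: Ii_def)

lemma bm_add: "bm F \<Longrightarrow> bm G \<Longrightarrow> bm (\<lambda>x. F x + G x)"
proof -
  assume "bm F" "bm G"
  then obtain A B where F: "F \<in> borel_measurable borel" "\<forall>x\<in>{0..<1}. \<bar>F x\<bar> \<le> A"
    and G: "G \<in> borel_measurable borel" "\<forall>x\<in>{0..<1}. \<bar>G x\<bar> \<le> B"
    unfolding bm_def by auto
  have "(\<lambda>x. F x + G x) \<in> borel_measurable borel" using F G by measurable
  moreover have "\<forall>x\<in>{0..<1}. \<bar>F x + G x\<bar> \<le> A + B" using F G by (auto intro: abs_triangle_ineq[THEN order_trans] add_mono)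
  ultimately show ?thesis unfolding bm_def by blast
qed

lemma bm_diff: "bm F \<Longrightarrow> bm G \<Longrightarrow> bm (\<lambda>x. F x - G x)"
  using bm_add[of F "\<lambda>x. (-1) * G x"] bm_mult[OF bm_const[of "-1"], of G] by simp

lemma bm_cmult: "bm F \<Longrightarrow> bm (\<lambda>x. c * F x)"
  using bm_mult[OF bm_const[of c], of F] by simp

lemma bm_sum: "(\<And>i. i \<in> A \<Longrightarrow> bm (F i)) \<Longrightarrow> bm (\<lambda>x. \<Sum>i\<in>A. F i x)"
proof (induction A rule: infinite_finite_induct)
  case (infinite A) then show ?case by (simp add: bm_const)
next
  case empty then show ?case by (simp add: bm_const)
next
  case (insert a A) then show ?case by (simp add: bm_add)
qed

lemma Pf_diff:
  assumes "z \<in> {0..<1}" "w \<in> {0..<1}"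
  shows "(Pop ^^ d) (fK K) z - (Pop ^^ d) (fK K) w \<le> 2 * real K / 2 ^ d"
proof -
  have eq: "(Pop ^^ d) (fK K) x = (Pop ^^ d) (g1 K) x - (Pop ^^ d) (Ii K) x" if "x \<in> {0..<1}" for x
  proof -
    have "(Pop ^^ d) (fK K) x = (Pop ^^ d) (\<lambda>y. g1 K y - Ii K y) x"
      by (rule Pop_cong[OF fK_decomp that])
    then show ?thesis by (simp add: Pop_diff)
  qed
  have 1: "(Pop ^^ d) (g1 K) z - (Pop ^^ d) (g1 K) w \<le> (real K - 0) / 2 ^ d"
    by (rule Pop_osc[OF g1_mono g1_bnd assms])
  have 2: "(Pop ^^ d) (Ii K) w - (Pop ^^ d) (Ii K) z \<le> (real K - 0) / 2 ^ d"
    by (rule Pop_osc[OF Ii_mono Ii_bnd assms(2,1)])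
  show ?thesis using eq[OF assms(1)] eq[OF assms(2)] 1 2 by simp
qed

lemma Pf_bound:
  assumes "z \<in> {0..<1}"
  shows "(Pop ^^ d) (fK K) z \<le> mK K + 2 * real K / 2 ^ d"
proof -
  have "(\<integral>w. (Pop ^^ d) (fK K) z \<partial>lam) \<le> (\<integral>w. (Pop ^^ d) (fK K) w + 2 * real K / 2 ^ d \<partial>lam)"
  proof (rule integral_mono)
    show "integrable lam (\<lambda>w. (Pop ^^ d) (fK K) z)" by simp
    show "integrable lam (\<lambda>w. (Pop ^^ d) (fK K) w + 2 * real K / 2 ^ d)"
      using bm_integrable[OF bm_Popn[OF bm_fK]] by simp
    fix w assume "w \<in> space lam"
    then show "(Pop ^^ d) (fK K) z \<le> (Pop ^^ d) (fK K) w + 2 * real K / 2 ^ d"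
      using Pf_diff[OF assms, of w d K] by simp
  qed
  also have "\<dots> = (\<integral>w. (Pop ^^ d) (fK K) w \<partial>lam) + 2 * real K / 2 ^ d"
    using bm_integrable[OF bm_Popn[OF bm_fK]] by simp
  also have "\<dots> = mK K + 2 * real K / 2 ^ d"
    using Pop_int[OF bm_fK] int_fK by simp
  finally show ?thesis by simp
qed

lemma cov_bound:
  "(\<integral>y. fK K y * fK K ((tau ^^ d) y) \<partial>lam) \<le> mK K * (mK K + 2 * real K / 2 ^ d)"
proof -
  have "(\<integral>y. fK K y * fK K ((tau ^^ d) y) \<partial>lam) = (\<integral>z. (Pop ^^ d) (fK K) z * fK K z \<partial>lam)"
    by (rule transfer[OF bm_fK bm_fK])
  also have "\<dots> \<le> (\<integral>z. (mK K + 2 * real K / 2 ^ d) * fK K z \<partial>lam)"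
  proof (rule integral_mono)
    show "integrable lam (\<lambda>z. (Pop ^^ d) (fK K) z * fK K z)"
      by (rule bm_integrable[OF bm_mult[OF bm_Popn[OF bm_fK] bm_fK]])
    show "integrable lam (\<lambda>z. (mK K + 2 * real K / 2 ^ d) * fK K z)"
      using bm_integrable[OF bm_fK] by simp
    fix z assume "z \<in> space lam"
    then show "(Pop ^^ d) (fK K) z * fK K z \<le> (mK K + 2 * real K / 2 ^ d) * fK K z"
      using Pf_bound fK_bnd by (auto intro!: mult_right_mono)
  qed
  also have "\<dots> = mK K * (mK K + 2 * real K / 2 ^ d)"
    using int_fK by (simp add: mult.commute)
  finally show ?thesis .
qed

lemma cov_bound2:
  "(\<integral>y. fK K y * fK K ((tau ^^ d) y) \<partial>lam) \<le> real K"
proof -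
  have "(\<integral>y. fK K y * fK K ((tau ^^ d) y) \<partial>lam) \<le> (\<integral>y. (fK K y ^ 2 + fK K ((tau ^^ d) y) ^ 2) / 2 \<partial>lam)"
  proof (rule integral_mono)
    show "integrable lam (\<lambda>y. fK K y * fK K ((tau ^^ d) y))"
      by (rule bm_integrable[OF bm_mult[OF bm_fK bm_comp_tau[OF bm_fK]]])
    have "bm (\<lambda>y. (1/2) * (fK K y * fK K y + fK K ((tau ^^ d) y) * fK K ((tau ^^ d) y)))"
      by (intro bm_cmult bm_add bm_mult bm_fK bm_comp_tau)
    then have "bm (\<lambda>y. (fK K y * fK K y + fK K ((tau ^^ d) y) * fK K ((tau ^^ d) y)) / 2)" by simp
    then show "integrable lam (\<lambda>y. (fK K y ^ 2 + fK K ((tau ^^ d) y) ^ 2) / 2)"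
      using bm_integrable by (simp add: power2_eq_square)
    fix y
    show "fK K y * fK K ((tau ^^ d) y) \<le> (fK K y ^ 2 + fK K ((tau ^^ d) y) ^ 2) / 2"
      using sum_squares_bound[of "fK K y" "fK K ((tau ^^ d) y)"] by (simp add: field_simps power2_eq_square)
  qed
  also have "\<dots> = ((\<integral>y. fK K y ^ 2 \<partial>lam) + (\<integral>y. fK K ((tau ^^ d) y) ^ 2 \<partial>lam)) / 2"
  proof -
    have i1: "integrable lam (\<lambda>y. fK K y ^ 2)"
      using bm_integrable[OF bm_mult[OF bm_fK bm_fK]] by (simp add: power2_eq_square)
    have i2: "integrable lam (\<lambda>y. fK K ((tau ^^ d) y) ^ 2)"
      using bm_integrable[OF bm_mult[OF bm_comp_tau[OF bm_fK] bm_comp_tau[OF bm_fK]]] by (simp add: power2_eq_square)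
    show ?thesis using i1 i2 by simp
  qed
  also have "(\<integral>y. fK K ((tau ^^ d) y) ^ 2 \<partial>lam) = (\<integral>y. fK K y ^ 2 \<partial>lam)"
    using stationary[of "\<lambda>y. fK K y ^ 2" d] bm_mult[OF bm_fK bm_fK] by (simp add: power2_eq_square)
  finally show ?thesis using int_fK2[of K] by simp
qed


lemma trunc_fK:
  assumes "r \<ge> 0"
  shows "trunc_digit r i x = fK (nat \<lfloor>r\<rfloor>) ((tau ^^ (i - 1)) x)"
proof -
  have "chi y \<le> r \<longleftrightarrow> chi y \<le> real (nat \<lfloor>r\<rfloor>)" for y
  proof -
    have "chi y = of_int \<lfloor>1/y\<rfloor>" by (simp add: chi_def)
    moreover have "real (nat \<lfloor>r\<rfloor>) = of_int \<lfloor>r\<rfloor>" using assms by simp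
    ultimately show ?thesis by (simp add: le_floor_iff)
  qed
  then show ?thesis unfolding trunc_digit_def digit_def fK_def by simp
qed

definition S :: "nat \<Rightarrow> nat \<Rightarrow> real \<Rightarrow> real" where
  "S K n x = (\<Sum>i<n. fK K ((tau ^^ i) x))"

lemma T_S: "r \<ge> 0 \<Longrightarrow> T n r x = S (nat \<lfloor>r\<rfloor>) n x"
  unfolding T_def S_def by (simp add: trunc_fK sum.atLeast1_atMost_eq)

lemma bm_S: "bm (S K n)"
  unfolding S_def[abs_def] by (intro bm_sum bm_comp_tau bm_fK)

lemma int_S: "(\<integral>x. S K n x \<partial>lam) = real n * mK K"
proof -
  have "(\<integral>x. S K n x \<partial>lam) = (\<Sum>i<n. (\<integral>x. fK K ((tau ^^ i) x) \<partial>lam))"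
    unfolding S_def by (rule Bochner_Integration.integral_sum) (intro bm_integrable bm_comp_tau bm_fK)
  also have "\<dots> = (\<Sum>i<n. mK K)"
    using stationary[OF bm_fK] int_fK by simp
  finally show ?thesis by simp
qed

definition cv :: "nat \<Rightarrow> nat \<Rightarrow> real" where
  "cv K d = (\<integral>y. (fK K y - mK K) * (fK K ((tau ^^ d) y) - mK K) \<partial>lam)"

lemma cv_eq: "cv K d = (\<integral>y. fK K y * fK K ((tau ^^ d) y) \<partial>lam) - mK K ^ 2"
proof -
  let ?f = "fK K" and ?m = "mK K"
  have i1: "integrable lam (\<lambda>y. ?f y * ?f ((tau ^^ d) y))"
    by (intro bm_integrable bm_mult bm_comp_tau bm_fK)
  have i2: "integrable lam ?f" "integrable lam (\<lambda>y. ?f ((tau ^^ d) y))"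
    by (intro bm_integrable bm_comp_tau bm_fK)+
  have "cv K d = (\<integral>y. ?f y * ?f ((tau ^^ d) y) - ?m * ?f y - ?m * ?f ((tau ^^ d) y) + ?m ^ 2 \<partial>lam)"
    unfolding cv_def by (rule Bochner_Integration.integral_cong) (auto simp: algebra_simps power2_eq_square)
  also have "\<dots> = (\<integral>y. ?f y * ?f ((tau ^^ d) y) \<partial>lam) - ?m * (\<integral>y. ?f y \<partial>lam) - ?m * (\<integral>y. ?f ((tau ^^ d) y) \<partial>lam) + ?m ^ 2"
    using i1 i2 by simp
  also have "\<dots> = (\<integral>y. ?f y * ?f ((tau ^^ d) y) \<partial>lam) - ?m ^ 2"
    using stationary[OF bm_fK] int_fK by (simp add: power2_eq_square)
  finally show ?thesis .
qed

lemma cv_le: "cv K d \<le> min (real K) (2 * real K * mK K / 2 ^ d)"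
proof -
  have "cv K d \<le> real K" using cv_eq[of K d] cov_bound2[of K d] zero_le_power2[of "mK K"] by linarith
  moreover have "cv K d \<le> 2 * real K * mK K / 2 ^ d"
    using cv_eq[of K d] cov_bound[of K d] by (simp add: algebra_simps power2_eq_square)
  ultimately show ?thesis by simp
qed

definition dist' :: "nat \<Rightarrow> nat \<Rightarrow> nat" where
  "dist' i j = (if i \<le> j then j - i else i - j)"

lemma int_XX:
  "(\<integral>x. (fK K ((tau ^^ i) x) - mK K) * (fK K ((tau ^^ j) x) - mK K) \<partial>lam) = cv K (dist' i j)"
proof -
  have gen: "(\<integral>x. (fK K ((tau ^^ i) x) - mK K) * (fK K ((tau ^^ j) x) - mK K) \<partial>lam) = cv K (j - i)"
    if "i \<le> j" for i j
  proof -
    let ?H = "\<lambda>y. (fK K y - mK K) * (fK K ((tau ^^ (j - i)) y) - mK K)"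
    have bH: "bm ?H" by (intro bm_mult bm_diff bm_fK bm_const bm_comp_tau)
    have "(tau ^^ j) x = (tau ^^ (j - i)) ((tau ^^ i) x)" for x
      using that by (metis funpow_add le_add_diff_inverse2 o_apply)
    then have "(\<integral>x. (fK K ((tau ^^ i) x) - mK K) * (fK K ((tau ^^ j) x) - mK K) \<partial>lam) = (\<integral>x. ?H ((tau ^^ i) x) \<partial>lam)"
      by simp
    also have "\<dots> = (\<integral>y. ?H y \<partial>lam)" by (rule stationary[OF bH])
    finally show ?thesis unfolding cv_def .
  qed
  show ?thesis
  proof (cases "i \<le> j")
    case True then show ?thesis using gen[OF True] by (simp add: dist'_def)
  next
    case False
    then have "j \<le> i" by simp
    then show ?thesis using gen[OF \<open>j \<le> i\<close>] False by (simp add: dist'_def mult.commute)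
  qed
qed


lemma var_S_expand:
  "(\<integral>x. (S K n x - real n * mK K) ^ 2 \<partial>lam) = (\<Sum>i<n. \<Sum>j<n. cv K (dist' i j))"
proof -
  let ?X = "\<lambda>i x. fK K ((tau ^^ i) x) - mK K"
  have bX: "bm (?X i)" for i by (rule bm_diff[OF bm_comp_tau[OF bm_fK] bm_const])
  have bXX: "bm (\<lambda>x. ?X i x * ?X j x)" for i j by (rule bm_mult[OF bX bX])
  have bS: "bm (\<lambda>x. \<Sum>j<n. ?X i x * ?X j x)" for i by (rule bm_sum[OF bXX])
  have "S K n x - real n * mK K = (\<Sum>i<n. ?X i x)" for x
    unfolding S_def by (simp add: sum_subtractf)
  then have "(\<integral>x. (S K n x - real n * mK K) ^ 2 \<partial>lam) = (\<integral>x. (\<Sum>i<n. \<Sum>j<n. ?X i x * ?X j x) \<partial>lam)"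
    by (simp add: power2_eq_square sum_product)
  also have "\<dots> = (\<Sum>i<n. \<integral>x. (\<Sum>j<n. ?X i x * ?X j x) \<partial>lam)"
    by (rule Bochner_Integration.integral_sum) (rule bm_integrable[OF bS])
  also have "\<dots> = (\<Sum>i<n. \<Sum>j<n. \<integral>x. ?X i x * ?X j x \<partial>lam)"
    by (intro sum.cong refl Bochner_Integration.integral_sum) (rule bm_integrable[OF bXX])
  also have "\<dots> = (\<Sum>i<n. \<Sum>j<n. cv K (dist' i j))"
    by (simp add: int_XX)
  finally show ?thesis .
qed


lemma sum_dist:
  assumes b: "\<And>d. b d \<ge> (0::real)" and "i < n"
  shows "(\<Sum>j<n. b (dist' i j)) \<le> 2 * (\<Sum>d<n. b d)"
proof -
  have "(\<Sum>j<n. b (dist' i j)) \<le> (\<Sum>j<n. (if j \<le> i then b (i - j) else 0) + (if i \<le> j then b (j - i) else 0))"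
    by (intro sum_mono) (auto simp: dist'_def b)
  also have "\<dots> = (\<Sum>j\<in>{j. j<n \<and> j \<le> i}. b (i - j)) + (\<Sum>j\<in>{j. j<n \<and> i \<le> j}. b (j - i))"
    by (simp add: sum.distrib sum.inter_filter[symmetric] Collect_conj_eq[symmetric] lessThan_def)
  also have "(\<Sum>j\<in>{j. j<n \<and> j \<le> i}. b (i - j)) = (\<Sum>d\<in>(\<lambda>j. i - j) ` {j. j<n \<and> j \<le> i}. b d)"
    by (rule sum.reindex[symmetric, unfolded comp_def]) (auto simp: inj_on_def)
  also have "\<dots> \<le> (\<Sum>d<n. b d)"
    by (rule sum_mono2) (use assms in auto)
  also have "(\<Sum>j\<in>{j. j<n \<and> i \<le> j}. b (j - i)) = (\<Sum>d\<in>(\<lambda>j. j - i) ` {j. j<n \<and> i \<le> j}. b d)"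
    by (rule sum.reindex[symmetric, unfolded comp_def]) (auto simp: inj_on_def)
  also have "\<dots> \<le> (\<Sum>d<n. b d)"
    by (rule sum_mono2) (use assms in auto)
  finally show ?thesis by simp
qed

lemma geom_tail:
  "(\<Sum>d<n. (if D \<le> d then (1/2::real) ^ d else 0)) = (if D \<le> n then 2 * (1/2) ^ D - 2 * (1/2) ^ n else 0)"
proof (induction n)
  case 0 then show ?case by simp
next
  case (Suc n)
  show ?case
  proof (cases "D \<le> n")
    case True then show ?thesis using Suc by simp
  next
    case False
    then show ?thesis using Suc by (cases "D = Suc n") auto
  qed
qed

lemma sum_min_geom:
  assumes "a \<ge> 0" "\<beta> \<ge> 0"
  shows "(\<Sum>d<n. min a (\<beta> / 2 ^ d)) \<le> a * real D + \<beta> * 2 / 2 ^ D"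
proof -
  have "(\<Sum>d<n. min a (\<beta> / 2 ^ d)) \<le> (\<Sum>d<n. (if d < D then a else 0) + \<beta> * (if D \<le> d then (1/2) ^ d else 0))"
  proof (intro sum_mono)
    fix d assume "d \<in> {..<n}"
    have m: "min a (\<beta> / 2 ^ d) \<le> a" "min a (\<beta> / 2 ^ d) \<le> \<beta> / 2 ^ d" by simp_all
    have e: "\<beta> * (1/2) ^ d = \<beta> / 2 ^ d" by (simp add: power_one_over)
    have p: "\<beta> / 2 ^ d \<ge> 0" using assms by simp
    show "min a (\<beta> / 2 ^ d) \<le> (if d < D then a else 0) + \<beta> * (if D \<le> d then (1/2) ^ d else 0)"
      using m e p assms by (cases "d < D") auto
  qed
  also have "\<dots> = (\<Sum>d<n. (if d < D then a else 0)) + \<beta> * (\<Sum>d<n. (if D \<le> d then (1/2) ^ d else 0))"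
    by (simp add: sum.distrib sum_distrib_left)
  also have "(\<Sum>d<n. (if d < D then a else 0)) = a * real (card {d. d < n \<and> d < D})"
    by (simp add: sum.inter_filter[symmetric] lessThan_def Collect_conj_eq)
  also have "real (card {d. d < n \<and> d < D}) \<le> real D"
  proof -
    have "card {d. d < n \<and> d < D} \<le> card {..<D}" by (intro card_mono) auto
    then show ?thesis by simp
  qed
  also have "(\<Sum>d<n. (if D \<le> d then (1/2::real) ^ d else 0)) \<le> 2 * (1/2) ^ D"
    unfolding geom_tail by simp
  finally show ?thesis using assms by (simp add: mult_left_mono power_one_over)
qed


lemma mK_nonneg: "0 \<le> mK K"
  unfolding mK_def by (intro sum_nonneg) auto

lemma var_S_bound:
  "(\<integral>x. (S K n x - real n * mK K) ^ 2 \<partial>lam) \<le> 2 * real n * (real K * real D + (2 * real K * mK K) * 2 / 2 ^ D)"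
proof -
  let ?b = "\<lambda>d. min (real K) (2 * real K * mK K / 2 ^ d)"
  have b0: "\<And>d. ?b d \<ge> 0" using mK_nonneg by simp
  have "(\<integral>x. (S K n x - real n * mK K) ^ 2 \<partial>lam) = (\<Sum>i<n. \<Sum>j<n. cv K (dist' i j))"
    by (rule var_S_expand)
  also have "\<dots> \<le> (\<Sum>i<n. \<Sum>j<n. ?b (dist' i j))"
    by (intro sum_mono cv_le)
  also have "\<dots> \<le> (\<Sum>i<n. 2 * (\<Sum>d<n. ?b d))"
    by (intro sum_mono sum_dist[OF b0]) simp
  also have "\<dots> = 2 * real n * (\<Sum>d<n. ?b d)" by simp
  also have "\<dots> \<le> 2 * real n * (real K * real D + (2 * real K * mK K) * 2 / 2 ^ D)"
    by (intro mult_left_mono sum_min_geom) (use mK_nonneg in auto)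
  finally show ?thesis .
qed

lemma cheb_S:
  assumes "a > 0"
  shows "measure lam {x\<in>space lam. a \<le> \<bar>S K n x - real n * mK K\<bar>} \<le> (\<integral>x. (S K n x - real n * mK K) ^ 2 \<partial>lam) / a ^ 2"
proof -
  have m: "S K n \<in> borel_measurable lam" using bm_S[of K n] unfolding bm_def by (auto intro: meas_lam)
  have i: "integrable lam (\<lambda>x. S K n x ^ 2)"
    using bm_integrable[OF bm_mult[OF bm_S bm_S]] by (simp add: power2_eq_square)
  show ?thesis using L.Chebyshev_inequality[OF m i assms] int_S by simp
qed

lemma mK_Suc: "mK (Suc K) = mK K + 1 / (real K + 2)"
  unfolding mK_def by simp

lemma mK_harm: "mK K = harm (K + 1) - 1"
proof (induction K)
  case 0 then show ?case by (simp add: mK_def harm_def)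
next
  case (Suc K)
  have i: "inverse (real (Suc (Suc K))) = 1/(real K + 2)" by (simp add: inverse_eq_divide add.commute)
  have h: "harm (Suc (Suc K)) = harm (Suc K) + 1/(real K + 2)"
    using harm_Suc[of "Suc K", where 'a=real] i by simp
  show ?case using Suc.IH h by (simp add: mK_Suc)
qed

lemma mK_lower: "mK K \<ge> ln (real K + 2) - 1"
  using ln_le_harm[of "K+1"] mK_harm[of K] by (simp add: add.commute)

lemma mK_upper: "mK K \<le> ln (real K + 1)"
proof -
  have "harm (Suc 0) = (1::real)" by (simp add: harm_def)
  then show ?thesis
    using euler_mascheroni_sequence_decreasing[of 1 "K+1"] mK_harm[of K] by (simp add: add.commute)
qed

lemma mK_diff: "K \<le> K' \<Longrightarrow> mK K' - mK K \<le> (real K' - real K) / (real K + 2)"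
proof (induction K' rule: dec_induct)
  case base then show ?case by simp
next
  case (step K')
  have "1 / (real K' + 2) \<le> 1 / (real K + 2)" using step(1) by (simp add: frac_le)
  then have "mK (Suc K') - mK K \<le> (real K' - real K) / (real K + 2) + 1 / (real K + 2)"
    using step(3) by (simp add: mK_Suc)
  also have "\<dots> = (real (Suc K') - real K) / (real K + 2)" by (simp add: field_simps)
  finally show ?case .
qed

lemma mK_mono: "K \<le> K' \<Longrightarrow> mK K \<le> mK K'"
  unfolding mK_def by (intro sum_mono2) auto


lemma ln3: "ln (3::real) \<ge> 1"
proof -
  have "ln (exp 1) \<le> ln (3::real)" using exp_le by (subst ln_le_cancel_iff) auto
  then show ?thesis by simp
qed

lemma ln2: "ln (2::real) \<ge> 1/2"
proof -
  have "ln (4::real) \<ge> ln 3" by simp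
  moreover have "ln (4::real) = 2 * ln 2"
    using ln_realpow[of 2 2] by simp
  ultimately show ?thesis using ln3 by simp
qed

lemma key_ineq:
  fixes L m \<epsilon> :: real
  assumes L: "L \<ge> 2" and m: "m \<ge> L/2" "m \<ge> 1" and e: "\<epsilon> > 0"
  shows "2 * L powr (3/4) * (log 2 m + 5) / (\<epsilon>^2 * m^2) \<le> 300 / \<epsilon>^2 * L powr (-19/16)"
proof -
  have mp: "m > 0" using m by simp
  have q1: "m powr (1/16) \<ge> 1" using m by (simp add: ge_one_powr_ge_zero)
  have "ln m \<le> m powr (1/16) / (1/16)" by (rule ln_powr_bound) (use m in auto)
  then have lnm: "ln m \<le> 16 * m powr (1/16)" by simp
  have "log 2 m = ln m / ln 2" by (simp add: log_def)
  also have "\<dots> \<le> 2 * ln m"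
  proof -
    have a: "ln m \<ge> 0" using m by simp
    have "ln m * 1 \<le> ln m * (2 * ln 2)" using a ln2 by (intro mult_left_mono) auto
    then have "ln m \<le> 2 * ln m * ln 2" by (simp add: mult_ac)
    moreover have "ln 2 > (0::real)" by simp
    ultimately show ?thesis by (simp add: pos_divide_le_eq)
  qed
  finally have a: "log 2 m + 5 \<le> 37 * m powr (1/16)" using lnm q1 by linarith
  have b: "m powr (1/16) / m^2 = m powr (-31/16)"
  proof -
    have "m^2 = m powr 2" using mp by (simp add: powr_numeral)
    moreover have "m powr (1/16) / m powr 2 = m powr (1/16 - 2)" by (rule powr_diff[symmetric])
    ultimately show ?thesis by simp
  qed
  have c: "m powr (-31/16) \<le> (L/2) powr (-31/16)"
    by (rule powr_mono2') (use L m in auto)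
  have d: "(L/2) powr (-31/16) \<le> 4 * L powr (-31/16)"
  proof -
    have "(L/2) powr (-31/16) = L powr (-31/16) / 2 powr (-31/16)" by (rule powr_divide)
    also have "\<dots> = L powr (-31/16) * 2 powr (31/16)" by (simp add: powr_minus_divide)
    also have "2 powr (31/16) \<le> (2::real) powr 2" by (rule powr_mono) auto
    then have "L powr (-31/16) * 2 powr (31/16) \<le> L powr (-31/16) * 4" by (intro mult_left_mono) auto
    finally show ?thesis by simp
  qed
  have e2: "L powr (3/4) * L powr (-31/16) = L powr (-19/16)"
    using L by (simp add: powr_add[symmetric])
  have "2 * L powr (3/4) * (log 2 m + 5) / (\<epsilon>^2 * m^2) = (2 * L powr (3/4) / \<epsilon>^2) * ((log 2 m + 5) / m^2)"
    by (simp add: field_simps)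
  also have "\<dots> \<le> (2 * L powr (3/4) / \<epsilon>^2) * (37 * (m powr (1/16) / m^2))"
  proof (rule mult_left_mono)
    show "(log 2 m + 5) / m^2 \<le> 37 * (m powr (1/16) / m^2)"
      using divide_right_mono[OF a, of "m^2"] by simp
  qed simp
  also have "\<dots> = (2 * L powr (3/4) / \<epsilon>^2) * (37 * m powr (-31/16))" by (simp add: b)
  also have "\<dots> \<le> (2 * L powr (3/4) / \<epsilon>^2) * (37 * (4 * L powr (-31/16)))"
    using c d by (intro mult_left_mono) auto
  also have "\<dots> = 296 / \<epsilon>^2 * (L powr (3/4) * L powr (-31/16))" by (simp add: field_simps)
  also have "\<dots> = 296 / \<epsilon>^2 * L powr (-19/16)" by (simp only: e2)
  also have "\<dots> \<le> 300 / \<epsilon>^2 * L powr (-19/16)" by (intro mult_right_mono divide_right_mono) auto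
  finally show ?thesis .
qed


definition Kn :: "nat \<Rightarrow> nat" where "Kn n = nat \<lfloor>t_seq n\<rfloor>"
definition mu :: "nat \<Rightarrow> real" where "mu n = real n * mK (Kn n)"

lemma t_nonneg: "t_seq n \<ge> 0"
  unfolding t_seq_def by simp

lemma int_T: "(\<integral>x. T n (t_seq n) x \<partial>lam) = mu n"
  using int_S unfolding mu_def Kn_def T_S[OF t_nonneg] by simp

lemma Kn_bnd: "real (Kn n) \<le> t_seq n" "t_seq n < real (Kn n) + 1"
proof -
  have "real (Kn n) = of_int \<lfloor>t_seq n\<rfloor>" unfolding Kn_def using t_nonneg by simp
  then show "real (Kn n) \<le> t_seq n" "t_seq n < real (Kn n) + 1" by linarith+
qed

lemma ln9: "n \<ge> 9 \<Longrightarrow> ln (real n) \<ge> 2"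
proof -
  assume n: "n \<ge> 9"
  have "ln (9::real) = 2 * ln 3" using ln_realpow[of 3 2] by simp
  then have "ln (9::real) \<ge> 2" using ln3 by simp
  moreover have "ln (real n) \<ge> ln 9" using n by simp
  ultimately show ?thesis by simp
qed

lemma t_ge_n: "n \<ge> 9 \<Longrightarrow> t_seq n \<ge> real n"
proof -
  assume n: "n \<ge> 9"
  have "ln (real n) powr (3/4) \<ge> 1" using ln9[OF n] by (intro ge_one_powr_ge_zero) auto
  then show ?thesis unfolding t_seq_def using mult_left_mono[of 1 "ln (real n) powr (3/4)" "real n"] by simp
qed

lemma m_lower: "n \<ge> 9 \<Longrightarrow> mK (Kn n) \<ge> ln (real n) - 1"
proof -
  assume n: "n \<ge> 9"
  have "real n \<le> real (Kn n) + 2" using t_ge_n[OF n] Kn_bnd(2)[of n] by linarith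
  then have "ln (real n) \<le> ln (real (Kn n) + 2)" using n by simp
  then show ?thesis using mK_lower[of "Kn n"] by linarith
qed

lemma prob_bound:
  assumes n: "n \<ge> 9" and e: "\<epsilon> > 0"
  shows "measure lam {x\<in>space lam. \<epsilon> * mu n \<le> \<bar>T n (t_seq n) x - mu n\<bar>} \<le> 300 / \<epsilon>^2 * ln (real n) powr (-19/16)"
proof -
  define K where "K = Kn n"
  define m where "m = mK K"
  define L where "L = ln (real n)"
  define D where "D = nat \<lceil>log 2 m\<rceil>"
  have L2: "L \<ge> 2" unfolding L_def by (rule ln9[OF n])
  have mL: "m \<ge> L - 1" unfolding m_def K_def L_def by (rule m_lower[OF n])
  then have m1: "m \<ge> 1" "m \<ge> L/2" using L2 by linarith+
  have np: "real n > 0" using n by simp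
  have lg: "log 2 m \<ge> 0" using m1 by simp
  have D1: "real D \<le> log 2 m + 1" unfolding D_def using lg by linarith
  have D2: "m \<le> 2 ^ D"
  proof -
    have "m = 2 powr (log 2 m)" using m1 by simp
    also have "\<dots> \<le> 2 powr (real D)" unfolding D_def using lg by (intro powr_mono) linarith+
    also have "\<dots> = 2 ^ D" by (simp add: powr_realpow)
    finally show ?thesis .
  qed
  have Kt: "real K \<le> t_seq n" unfolding K_def by (rule Kn_bnd)
  have tn: "t_seq n = real n * L powr (3/4)" unfolding t_seq_def L_def ..
  have set_eq: "{x\<in>space lam. \<epsilon> * mu n \<le> \<bar>T n (t_seq n) x - mu n\<bar>} = {x\<in>space lam. \<epsilon> * (real n * m) \<le> \<bar>S K n x - real n * mK K\<bar>}"
    unfolding mu_def m_def K_def T_S[OF t_nonneg] Kn_def by simp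
  have ap: "\<epsilon> * (real n * m) > 0" using e np m1 by simp
  have "measure lam {x\<in>space lam. \<epsilon> * mu n \<le> \<bar>T n (t_seq n) x - mu n\<bar>} \<le> (\<integral>x. (S K n x - real n * mK K) ^ 2 \<partial>lam) / (\<epsilon> * (real n * m)) ^ 2"
    unfolding set_eq by (rule cheb_S[OF ap])
  also have "\<dots> \<le> (2 * real n * (real K * real D + (2 * real K * mK K) * 2 / 2 ^ D)) / (\<epsilon> * (real n * m)) ^ 2"
    by (intro divide_right_mono var_S_bound) simp
  also have "\<dots> \<le> (2 * real n * (t_seq n * (log 2 m + 5))) / (\<epsilon> * (real n * m)) ^ 2"
  proof (intro divide_right_mono mult_left_mono)
    have "(2 * real K * mK K) * 2 / 2 ^ D = 4 * real K * (m / 2 ^ D)" unfolding m_def by simp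
    also have "\<dots> \<le> 4 * real K * 1" using D2 by (intro mult_left_mono) auto
    finally have "real K * real D + (2 * real K * mK K) * 2 / 2 ^ D \<le> real K * (log 2 m + 1) + 4 * real K"
      using D1 by (smt (verit) mult_left_mono of_nat_0_le_iff)
    also have "\<dots> = real K * (log 2 m + 5)" by (simp add: algebra_simps)
    also have "\<dots> \<le> t_seq n * (log 2 m + 5)" using Kt lg by (intro mult_right_mono) auto
    finally show "real K * real D + (2 * real K * mK K) * 2 / 2 ^ D \<le> t_seq n * (log 2 m + 5)" .
  qed simp_all
  also have "\<dots> = ((real n * real n) * (2 * L powr (3/4) * (log 2 m + 5))) / ((real n * real n) * (\<epsilon>^2 * m^2))"
    unfolding tn by (simp add: power2_eq_square mult_ac)
  also have "\<dots> = 2 * L powr (3/4) * (log 2 m + 5) / (\<epsilon>^2 * m^2)"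
    by (rule mult_divide_mult_cancel_left) (use np in simp)
  also have "\<dots> \<le> 300 / \<epsilon>^2 * L powr (-19/16)"
    by (rule key_ineq[OF L2 m1(2) m1(1) e])
  finally show ?thesis unfolding L_def .
qed


lemma t_mono: "n \<le> n' \<Longrightarrow> t_seq n \<le> t_seq n'"
proof -
  assume a: "n \<le> n'"
  show ?thesis
  proof (cases "n = 0")
    case True then show ?thesis using t_nonneg by (simp add: t_seq_def)
  next
    case False
    then have "ln (real n) \<le> ln (real n')" "ln (real n) \<ge> 0" using a by auto
    then have "ln (real n) powr (3/4) \<le> ln (real n') powr (3/4)" by (intro powr_mono2) auto
    then show ?thesis unfolding t_seq_def using a by (intro mult_mono) auto
  qed
qed

lemma Kn_mono: "n \<le> n' \<Longrightarrow> Kn n \<le> Kn n'"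
  unfolding Kn_def by (intro nat_mono floor_mono t_mono)

lemma mu_mono: "n \<le> n' \<Longrightarrow> mu n \<le> mu n'"
  unfolding mu_def using mK_nonneg by (intro mult_mono mK_mono Kn_mono) auto

lemma mu_pos: "n \<ge> 9 \<Longrightarrow> mu n > 0"
proof -
  assume n: "n \<ge> 9"
  have "mK (Kn n) \<ge> 1" using m_lower[OF n] ln9[OF n] by linarith
  then show ?thesis unfolding mu_def using n by simp
qed

lemma mu_ratio:
  assumes n: "9 \<le> n" "n \<le> n'"
  shows "mu n' / mu n \<le> (real n' / real n) * ((real n' / real n) * (ln (real n') / ln (real n)) + 1 / real n)"
proof -
  define t where "t = t_seq n"
  define t' where "t' = t_seq n'"
  define K where "K = Kn n"
  define K' where "K' = Kn n'"
  define m where "m = mK K"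
  define m' where "m' = mK K'"
  define L where "L = ln (real n)"
  define L' where "L' = ln (real n')"
  have np: "real n > 0" using n by simp
  have KK: "K \<le> K'" unfolding K_def K'_def by (rule Kn_mono[OF n(2)])
  have tt: "t \<le> t'" unfolding t_def t'_def by (rule t_mono[OF n(2)])
  have tn: "t \<ge> real n" unfolding t_def by (rule t_ge_n[OF n(1)])
  have tp: "t > 0" using tn np by simp
  have K1: "real K' \<le> t'" "t < real K + 1" unfolding t_def t'_def K_def K'_def by (rule Kn_bnd)+
  have m1: "m \<ge> 1" unfolding m_def K_def using m_lower[OF n(1)] ln9[OF n(1)] by linarith
  have L2: "L \<ge> 2" unfolding L_def by (rule ln9[OF n(1)])
  have LL: "L \<le> L'" unfolding L_def L'_def using n by simp
  have dm: "m' - m \<le> (real K' - real K) / (real K + 2)" unfolding m_def m'_def by (rule mK_diff[OF KK])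
  have dm0: "m' - m \<ge> 0" unfolding m_def m'_def using mK_mono[OF KK] by simp
  have "(real K' - real K) / (real K + 2) \<le> (t' - t + 1) / (real K + 2)"
    using K1 by (intro divide_right_mono) auto
  also have "\<dots> \<le> (t' - t + 1) / t"
    using K1 tp tt by (intro divide_left_mono) auto
  finally have dm2: "m' - m \<le> (t' - t + 1) / t" using dm by linarith
  have "m' / m = 1 + (m' - m) / m" using m1 by (simp add: field_simps)
  also have "\<dots> \<le> 1 + (m' - m)" using m1 dm0 by (simp add: divide_le_eq_1 divide_le_eq mult_le_cancel_left1)
  also have "\<dots> \<le> 1 + (t' - t + 1) / t" using dm2 by simp
  also have "\<dots> = t' / t + 1 / t" using tp by (simp add: field_simps)
  finally have mm: "m' / m \<le> t' / t + 1 / t" .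
  have e: "t' / t = (real n' / real n) * ((L' / L) powr (3/4))"
    unfolding t_def t'_def t_seq_def L_def L'_def using np L2 unfolding L_def
    by (simp add: powr_divide field_simps)
  have "(L' / L) powr (3/4) \<le> (L' / L) powr 1"
    using L2 LL by (intro powr_mono) auto
  also have "\<dots> = L' / L" using L2 LL by simp
  finally have p: "(L' / L) powr (3/4) \<le> L' / L" .
  have tt2: "t' / t \<le> (real n' / real n) * (L' / L)"
    unfolding e using p np by (intro mult_left_mono) auto
  have "1 / t \<le> 1 / real n" using tn np by (intro divide_left_mono) auto
  then have mm2: "m' / m \<le> (real n' / real n) * (L' / L) + 1 / real n" using mm tt2 by linarith
  have "mu n' / mu n = (real n' / real n) * (m' / m)"
    unfolding mu_def m_def m'_def K_def K'_def by simp
  also have "\<dots> \<le> (real n' / real n) * ((real n' / real n) * (L' / L) + 1 / real n)"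
    using mm2 np by (intro mult_left_mono) auto
  finally show ?thesis unfolding L_def L'_def .
qed


definition Eseq :: "nat \<Rightarrow> real" where "Eseq k = exp (real k powr (9/10))"
definition Nsub :: "nat \<Rightarrow> nat" where "Nsub k = nat \<lceil>Eseq k\<rceil> + 9"

lemma Ex_pos: "Eseq k > 0" unfolding Eseq_def by simp
lemma Ex_ge1: "Eseq k \<ge> 1" unfolding Eseq_def by simp

lemma Nsub_real: "Eseq k + 9 \<le> real (Nsub k)" "real (Nsub k) < Eseq k + 10"
proof -
  have "real (nat \<lceil>Eseq k\<rceil>) = of_int \<lceil>Eseq k\<rceil>" using Ex_pos[of k] by simp
  moreover have "Eseq k \<le> of_int \<lceil>Eseq k\<rceil>" "of_int \<lceil>Eseq k\<rceil> < Eseq k + 1" by linarith+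
  ultimately show "Eseq k + 9 \<le> real (Nsub k)" "real (Nsub k) < Eseq k + 10" unfolding Nsub_def by simp_all
qed

lemma Ex_mono: "k \<le> k' \<Longrightarrow> Eseq k \<le> Eseq k'"
  unfolding Eseq_def by (simp add: powr_mono2)

lemma Nsub_mono: "mono Nsub"
proof (rule monoI)
  fix x y :: nat assume "x \<le> y"
  then have "\<lceil>Eseq x\<rceil> \<le> \<lceil>Eseq y\<rceil>" using Ex_mono by (simp add: ceiling_mono)
  then have "nat \<lceil>Eseq x\<rceil> \<le> nat \<lceil>Eseq y\<rceil>" by (rule nat_mono)
  then show "Nsub x \<le> Nsub y" unfolding Nsub_def by linarith
qed

lemma Nsub_ge9: "Nsub k \<ge> 9" unfolding Nsub_def by simp

lemma Ex_lim: "filterlim Eseq at_top sequentially"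
  unfolding Eseq_def by real_asymp

lemma Nsub_lim: "filterlim Nsub at_top sequentially"
  unfolding filterlim_at_top
proof
  fix Z :: nat
  have "eventually (\<lambda>k. real Z \<le> Eseq k) sequentially" using Ex_lim by (simp add: filterlim_at_top)
  then show "eventually (\<lambda>k. Z \<le> Nsub k) sequentially"
  proof (rule eventually_mono)
    fix k assume "real Z \<le> Eseq k"
    then have "real Z \<le> real (Nsub k)" using Nsub_real(1)[of k] by linarith
    then show "Z \<le> Nsub k" by simp
  qed
qed

lemma ln_Nsub_lower: "ln (real (Nsub k)) \<ge> real k powr (9/10)"
proof -
  have "ln (Eseq k) \<le> ln (real (Nsub k))" using Nsub_real(1)[of k] Ex_pos[of k] by simp
  then show ?thesis unfolding Eseq_def by simp
qed

lemma ln_Nsub_upper: "ln (real (Nsub k)) \<le> real k powr (9/10) + 10"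
proof -
  have "real (Nsub k) \<le> 11 * Eseq k" using Nsub_real(2)[of k] Ex_ge1[of k] by linarith
  then have "ln (real (Nsub k)) \<le> ln (11 * Eseq k)" using Nsub_ge9[of k] by simp
  also have "\<dots> = ln 11 + real k powr (9/10)" unfolding Eseq_def by (simp add: ln_mult)
  also have "ln (11::real) \<le> 10" using ln_le_minus_one[of 11] by simp
  then have "ln 11 + real k powr (9/10) \<le> real k powr (9/10) + 10" by simp
  finally show ?thesis by simp
qed

lemma ratio_bound:
  assumes k: "k \<ge> 1"
  shows "mu (Nsub (Suc k)) / mu (Nsub k) \<le>
    ((Eseq (Suc k) + 10) / Eseq k) * (((Eseq (Suc k) + 10) / Eseq k) * ((real (Suc k) powr (9/10) + 10) / real k powr (9/10)) + 1 / Eseq k)"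
proof -
  define n n' where "n = Nsub k" and "n' = Nsub (Suc k)"
  have nn: "9 \<le> n" "n \<le> n'" unfolding n_def n'_def using Nsub_ge9 Nsub_mono by (auto simp: monoD)
  have np: "real n > 0" using nn by simp
  have r1: "real n' / real n \<le> (Eseq (Suc k) + 10) / Eseq k"
  proof -
    have "real n' / real n \<le> (Eseq (Suc k) + 10) / real n"
      using Nsub_real(2)[of "Suc k"] np unfolding n'_def by (intro divide_right_mono) auto
    also have "\<dots> \<le> (Eseq (Suc k) + 10) / Eseq k"
      using Nsub_real(1)[of k] Ex_pos[of k] Ex_pos[of "Suc k"] unfolding n_def by (intro divide_left_mono) auto
    finally show ?thesis .
  qed
  have kp: "real k powr (9/10) > 0" using k by simp
  have r2: "ln (real n') / ln (real n) \<le> (real (Suc k) powr (9/10) + 10) / real k powr (9/10)"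
  proof -
    have "ln (real n') / ln (real n) \<le> (real (Suc k) powr (9/10) + 10) / ln (real n)"
      using ln_Nsub_upper[of "Suc k"] ln9[OF nn(1)] unfolding n'_def by (intro divide_right_mono) auto
    also have "\<dots> \<le> (real (Suc k) powr (9/10) + 10) / real k powr (9/10)"
      using ln_Nsub_lower[of k] kp ln9[OF nn(1)] unfolding n_def by (intro divide_left_mono mult_pos_pos) auto
    finally show ?thesis .
  qed
  have r3: "1 / real n \<le> 1 / Eseq k"
    using Nsub_real(1)[of k] Ex_pos[of k] unfolding n_def by (intro divide_left_mono) auto
  have pos1: "real n' / real n \<ge> 0" "ln (real n') / ln (real n) \<ge> 0"
    using nn ln9[OF nn(1)] by auto
  have "mu n' / mu n \<le> (real n' / real n) * ((real n' / real n) * (ln (real n') / ln (real n)) + 1 / real n)"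
    by (rule mu_ratio[OF nn])
  also have "\<dots> \<le> ((Eseq (Suc k) + 10) / Eseq k) * (((Eseq (Suc k) + 10) / Eseq k) * ((real (Suc k) powr (9/10) + 10) / real k powr (9/10)) + 1 / Eseq k)"
  proof -
    let ?a = "real n' / real n" and ?A = "(Eseq (Suc k) + 10) / Eseq k"
    let ?b = "ln (real n') / ln (real n)" and ?B = "(real (Suc k) powr (9/10) + 10) / real k powr (9/10)"
    let ?c = "1 / real n" and ?C = "1 / Eseq k"
    have A0: "?A \<ge> 0" using pos1(1) r1 by linarith
    have c0: "?c \<ge> 0" using np by simp
    have ab: "?a * ?b \<le> ?A * ?B" using r1 r2 pos1 A0 by (intro mult_mono) auto
    have h1: "?a * ?b + ?c \<le> ?A * ?B + ?C" using ab r3 by linarith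
    have h2: "?a * ?b + ?c \<ge> 0" using pos1 c0 by (intro add_nonneg_nonneg mult_nonneg_nonneg) auto
    show ?thesis by (rule mult_mono[OF r1 h1 A0 h2])
  qed
  finally show ?thesis unfolding n_def n'_def .
qed

lemma ratio_lim: "(\<lambda>k. mu (Nsub (Suc k)) / mu (Nsub k)) \<longlonglongrightarrow> 1"
proof (rule tendsto_sandwich)
  show "eventually (\<lambda>k. 1 \<le> mu (Nsub (Suc k)) / mu (Nsub k)) sequentially"
  proof (rule always_eventually, rule allI)
    fix k
    have "mu (Nsub k) \<le> mu (Nsub (Suc k))" using Nsub_mono by (intro mu_mono) (simp add: monoD)
    moreover have "mu (Nsub k) > 0" using mu_pos Nsub_ge9 by blast
    ultimately show "1 \<le> mu (Nsub (Suc k)) / mu (Nsub k)" by simp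
  qed
  show "eventually (\<lambda>k. mu (Nsub (Suc k)) / mu (Nsub k) \<le>
    ((Eseq (Suc k) + 10) / Eseq k) * (((Eseq (Suc k) + 10) / Eseq k) * ((real (Suc k) powr (9/10) + 10) / real k powr (9/10)) + 1 / Eseq k)) sequentially"
    using ratio_bound unfolding eventually_sequentially by blast
  have u: "(\<lambda>k. (Eseq (Suc k) + 10) / Eseq k) \<longlonglongrightarrow> 1" unfolding Eseq_def by real_asymp
  have v: "(\<lambda>k. (real (Suc k) powr (9/10) + 10) / real k powr (9/10)) \<longlonglongrightarrow> 1" by real_asymp
  have w: "(\<lambda>k. 1 / Eseq k) \<longlonglongrightarrow> 0" unfolding Eseq_def by real_asymp
  have "(\<lambda>k. ((Eseq (Suc k) + 10) / Eseq k) * (((Eseq (Suc k) + 10) / Eseq k) * ((real (Suc k) powr (9/10) + 10) / real k powr (9/10)) + 1 / Eseq k)) \<longlonglongrightarrow> 1 * (1 * 1 + 0)"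
    by (intro tendsto_intros u v w)
  then show "(\<lambda>k. ((Eseq (Suc k) + 10) / Eseq k) * (((Eseq (Suc k) + 10) / Eseq k) * ((real (Suc k) powr (9/10) + 10) / real k powr (9/10)) + 1 / Eseq k)) \<longlonglongrightarrow> 1"
    by simp
qed simp


lemma interp:
  fixes s \<mu> :: "nat \<Rightarrow> real" and N :: "nat \<Rightarrow> nat"
  assumes s_mono: "\<And>n n'. n \<le> n' \<Longrightarrow> s n \<le> s n'"
    and mu_mono: "\<And>n n'. n \<le> n' \<Longrightarrow> \<mu> n \<le> \<mu> n'"
    and s_nn: "\<And>n. s n \<ge> 0"
    and mu_pos: "\<And>n. n \<ge> N 0 \<Longrightarrow> \<mu> n > 0"
    and N_mono: "mono N" and N_lim: "filterlim N at_top sequentially"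
    and lim1: "(\<lambda>k. s (N k) / \<mu> (N k)) \<longlonglongrightarrow> 1"
    and lim2: "(\<lambda>k. \<mu> (N (Suc k)) / \<mu> (N k)) \<longlonglongrightarrow> 1"
  shows "(\<lambda>n. s n / \<mu> n) \<longlonglongrightarrow> 1"
proof -
  define kap where "kap n = (LEAST k. n < N (Suc k))" for n
  have ex: "\<exists>k. n < N (Suc k)" for n
  proof -
    have "eventually (\<lambda>k. Suc n \<le> N k) sequentially" using N_lim by (simp add: filterlim_at_top)
    then obtain M where "\<forall>k\<ge>M. Suc n \<le> N k" by (auto simp: eventually_sequentially)
    then have "Suc n \<le> N (Suc M)" by simp
    then show ?thesis by (intro exI[of _ M]) simp
  qed
  have k1: "n < N (Suc (kap n))" for n unfolding kap_def by (rule LeastI_ex[OF ex])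
  have k2: "N (kap n) \<le> n" if "n \<ge> N 0" for n
  proof (cases "kap n")
    case 0 then show ?thesis using that by simp
  next
    case (Suc j)
    then have "\<not> n < N (Suc j)" unfolding kap_def using not_less_Least[of j "\<lambda>k. n < N (Suc k)"] by (metis Suc lessI kap_def)
    then show ?thesis using Suc by simp
  qed
  have kap_lim: "filterlim kap at_top sequentially"
    unfolding filterlim_at_top
  proof
    fix K0
    show "eventually (\<lambda>n. K0 \<le> kap n) sequentially"
      unfolding eventually_sequentially
    proof (intro exI allI impI)
      fix n assume "N K0 \<le> n"
      show "K0 \<le> kap n"
      proof (rule ccontr)
        assume "\<not> K0 \<le> kap n"
        then have "Suc (kap n) \<le> K0" by simp
        then have "N (Suc (kap n)) \<le> N K0" using N_mono by (simp add: monoD)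
        then show False using k1[of n] \<open>N K0 \<le> n\<close> by simp
      qed
    qed
  qed
  have mNk: "\<mu> (N k) > 0" for k using mu_pos N_mono by (simp add: monoD)
  define u where "u k = s (N (Suc k)) / \<mu> (N k)" for k
  define l where "l k = s (N k) / \<mu> (N (Suc k))" for k
  have u_eq: "u k = (s (N (Suc k)) / \<mu> (N (Suc k))) * (\<mu> (N (Suc k)) / \<mu> (N k))" for k
    unfolding u_def using mNk[of "Suc k"] by simp
  have l_eq: "l k = (s (N k) / \<mu> (N k)) / (\<mu> (N (Suc k)) / \<mu> (N k))" for k
    unfolding l_def using mNk[of k] by simp
  have ul: "u \<longlonglongrightarrow> 1"
  proof -
    have "(\<lambda>k. (s (N (Suc k)) / \<mu> (N (Suc k))) * (\<mu> (N (Suc k)) / \<mu> (N k))) \<longlonglongrightarrow> 1 * 1"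
      by (intro tendsto_mult lim2) (rule LIMSEQ_Suc[OF lim1])
    then show ?thesis by (simp add: u_eq[abs_def])
  qed
  have ll: "l \<longlonglongrightarrow> 1"
  proof -
    have "(\<lambda>k. (s (N k) / \<mu> (N k)) / (\<mu> (N (Suc k)) / \<mu> (N k))) \<longlonglongrightarrow> 1 / 1"
      by (intro tendsto_divide lim1 lim2) simp
    then show ?thesis by (simp add: l_eq[abs_def])
  qed
  have "(\<lambda>n. l (kap n)) \<longlonglongrightarrow> 1" by (rule filterlim_compose[OF ll kap_lim])
  moreover have "(\<lambda>n. u (kap n)) \<longlonglongrightarrow> 1" by (rule filterlim_compose[OF ul kap_lim])
  moreover have "eventually (\<lambda>n. l (kap n) \<le> s n / \<mu> n) sequentially"
    unfolding eventually_sequentially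
  proof (intro exI allI impI)
    fix n assume n: "N 0 \<le> n"
    have a: "\<mu> n \<le> \<mu> (N (Suc (kap n)))" using k1[of n] mu_mono by simp
    have "s (N (kap n)) / \<mu> (N (Suc (kap n))) \<le> s (N (kap n)) / \<mu> n"
      using a mu_pos[OF n] s_nn by (intro divide_left_mono) auto
    also have "\<dots> \<le> s n / \<mu> n" using s_mono[OF k2[OF n]] mu_pos[OF n] by (intro divide_right_mono) auto
    finally show "l (kap n) \<le> s n / \<mu> n" unfolding l_def .
  qed
  moreover have "eventually (\<lambda>n. s n / \<mu> n \<le> u (kap n)) sequentially"
    unfolding eventually_sequentially
  proof (intro exI allI impI)
    fix n assume n: "N 0 \<le> n"
    have a: "\<mu> (N (kap n)) \<le> \<mu> n" using k2[OF n] mu_mono by simp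
    have "s n / \<mu> n \<le> s (N (Suc (kap n))) / \<mu> n"
      using s_mono[of n "N (Suc (kap n))"] k1[of n] mu_pos[OF n] by (intro divide_right_mono) auto
    also have "\<dots> \<le> s (N (Suc (kap n))) / \<mu> (N (kap n))"
      using a mNk[of "kap n"] s_nn by (intro divide_left_mono) auto
    finally show "s n / \<mu> n \<le> u (kap n)" unfolding u_def .
  qed
  ultimately show ?thesis
    using tendsto_sandwich[of "\<lambda>n. l (kap n)" "\<lambda>n. s n / \<mu> n" sequentially "\<lambda>n. u (kap n)" 1] by blast
qed


lemma taun_range: "x \<in> {0..<1} \<Longrightarrow> (tau ^^ i) x \<in> {0..<1}"
  by (cases i) (auto simp: tau_range)

lemma fK_mono: "y \<in> {0..<1} \<Longrightarrow> K \<le> K' \<Longrightarrow> fK K y \<le> fK K' y"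
  using chi_nonneg[of y] unfolding fK_def by auto

lemma S_mono:
  assumes x: "x \<in> {0..<1}" and "K \<le> K'" "n \<le> n'"
  shows "S K n x \<le> S K' n' x"
proof -
  have "S K n x \<le> S K' n x" unfolding S_def
    by (intro sum_mono fK_mono taun_range x assms(2))
  also have "\<dots> \<le> S K' n' x" unfolding S_def
    using fK_bnd[OF taun_range[OF x]] assms(3) by (intro sum_mono2) auto
  finally show ?thesis .
qed

lemma S_nonneg: "x \<in> {0..<1} \<Longrightarrow> S K n x \<ge> 0"
  unfolding S_def using fK_bnd[OF taun_range] by (intro sum_nonneg) auto

lemma T_eq: "(\<lambda>x. T n (t_seq n) x) = S (Kn n) n"
  by (rule ext) (simp add: T_S[OF t_nonneg] Kn_def)

lemma T_meas[measurable]: "(\<lambda>x. T n (t_seq n) x) \<in> borel_measurable lam"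
  unfolding T_eq using bm_S[of "Kn n" n] by (auto simp: bm_def intro: meas_lam)

definition Aset :: "real \<Rightarrow> nat \<Rightarrow> real set" where
  "Aset \<epsilon> k = {x\<in>space lam. \<epsilon> * mu (Nsub k) \<le> \<bar>T (Nsub k) (t_seq (Nsub k)) x - mu (Nsub k)\<bar>}"

lemma Aset_sets: "Aset \<epsilon> k \<in> sets lam"
  unfolding Aset_def by measurable

lemma Aset_bound:
  assumes k: "k \<ge> 1" and e: "\<epsilon> > 0"
  shows "measure lam (Aset \<epsilon> k) \<le> 300 / \<epsilon>^2 * real k powr (-171/160)"
proof -
  have "measure lam (Aset \<epsilon> k) \<le> 300 / \<epsilon>^2 * ln (real (Nsub k)) powr (-19/16)"
    unfolding Aset_def by (rule prob_bound[OF Nsub_ge9 e])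
  moreover have "ln (real (Nsub k)) powr (-19/16) \<le> (real k powr (9/10)) powr (-19/16)"
    using k ln_Nsub_lower[of k] by (intro powr_mono2') auto
  moreover have "(real k powr (9/10)) powr (-19/16) = real k powr (-171/160)"
    by (simp add: powr_powr)
  ultimately have p: "measure lam (Aset \<epsilon> k) \<le> 300 / \<epsilon>^2 * ln (real (Nsub k)) powr (-19/16)"
    and q: "ln (real (Nsub k)) powr (-19/16) \<le> real k powr (-171/160)" by simp_all
  have "300 / \<epsilon>^2 * ln (real (Nsub k)) powr (-19/16) \<le> 300 / \<epsilon>^2 * real k powr (-171/160)"
    using q e by (intro mult_left_mono) auto
  then show ?thesis using p by linarith
qed

lemma Aset_summable:
  assumes e: "\<epsilon> > 0"
  shows "summable (\<lambda>k. measure lam (Aset \<epsilon> k))"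
proof (rule summable_comparison_test_ev)
  show "summable (\<lambda>k. 300 / \<epsilon>^2 * real k powr (-171/160))"
    by (intro summable_mult) (simp add: summable_real_powr_iff)
  show "eventually (\<lambda>k. norm (measure lam (Aset \<epsilon> k)) \<le> 300 / \<epsilon>^2 * real k powr (-171/160)) sequentially"
    unfolding eventually_sequentially using Aset_bound[OF _ e] by (intro exI[of _ 1]) auto
qed

lemma AE_ev:
  assumes e: "\<epsilon> > 0"
  shows "AE x in lam. eventually (\<lambda>k. \<bar>T (Nsub k) (t_seq (Nsub k)) x - mu (Nsub k)\<bar> < \<epsilon> * mu (Nsub k)) sequentially"
proof -
  have "AE x in lam. eventually (\<lambda>k. x \<in> space lam - Aset \<epsilon> k) sequentially"
    by (rule borel_cantelli_AE1[OF Aset_sets _ Aset_summable[OF e]]) (simp add: less_top[symmetric])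
  from this AE_space show ?thesis
  proof eventually_elim
    case (elim x)
    then have x: "x \<in> space lam" and ev: "eventually (\<lambda>k. x \<in> space lam - Aset \<epsilon> k) sequentially" by auto
    show "eventually (\<lambda>k. \<bar>T (Nsub k) (t_seq (Nsub k)) x - mu (Nsub k)\<bar> < \<epsilon> * mu (Nsub k)) sequentially"
      using ev by (rule eventually_mono) (use x in \<open>auto simp: Aset_def\<close>)
  qed
qed

lemma lim1_AE: "AE x in lam. (\<lambda>k. T (Nsub k) (t_seq (Nsub k)) x / mu (Nsub k)) \<longlonglongrightarrow> 1"
proof -
  have "\<forall>j::nat. AE x in lam. eventually (\<lambda>k. \<bar>T (Nsub k) (t_seq (Nsub k)) x - mu (Nsub k)\<bar> < (1 / real (Suc j)) * mu (Nsub k)) sequentially"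
    by (intro allI AE_ev) simp
  then have "AE x in lam. \<forall>j::nat. eventually (\<lambda>k. \<bar>T (Nsub k) (t_seq (Nsub k)) x - mu (Nsub k)\<bar> < (1 / real (Suc j)) * mu (Nsub k)) sequentially"
    by (simp add: AE_all_countable)
  then show ?thesis
  proof eventually_elim
    case (elim x)
    then have H: "\<forall>j::nat. eventually (\<lambda>k. \<bar>T (Nsub k) (t_seq (Nsub k)) x - mu (Nsub k)\<bar> < (1 / real (Suc j)) * mu (Nsub k)) sequentially" .
    show "(\<lambda>k. T (Nsub k) (t_seq (Nsub k)) x / mu (Nsub k)) \<longlonglongrightarrow> 1"
      unfolding tendsto_iff
    proof (intro allI impI)
      fix e :: real assume e: "e > 0"
      obtain j where j: "inverse (real (Suc j)) < e" using reals_Archimedean[OF e] by blast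
      show "eventually (\<lambda>k. dist (T (Nsub k) (t_seq (Nsub k)) x / mu (Nsub k)) 1 < e) sequentially"
        using H[rule_format, of j]
      proof (rule eventually_mono)
        fix k assume a: "\<bar>T (Nsub k) (t_seq (Nsub k)) x - mu (Nsub k)\<bar> < (1 / real (Suc j)) * mu (Nsub k)"
        have mp: "mu (Nsub k) > 0" by (rule mu_pos[OF Nsub_ge9])
        have "dist (T (Nsub k) (t_seq (Nsub k)) x / mu (Nsub k)) 1 = \<bar>T (Nsub k) (t_seq (Nsub k)) x - mu (Nsub k)\<bar> / mu (Nsub k)"
          using mp by (simp add: dist_real_def field_simps)
        also have "\<dots> < 1 / real (Suc j)" using a mp by (simp add: divide_less_eq)
        also have "\<dots> < e" using j by (simp add: inverse_eq_divide)
        finally show "dist (T (Nsub k) (t_seq (Nsub k)) x / mu (Nsub k)) 1 < e" .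
      qed
    qed
  qed
qed

theorem mainTheorem7:
  shows "AE x in lam.
    (\<lambda>n. T n (t_seq n) x / (\<integral>y. T n (t_seq n) y \<partial>lam)) \<longlonglongrightarrow> 1"
proof -
  have "AE x in lam. (\<lambda>n. T n (t_seq n) x / mu n) \<longlonglongrightarrow> 1"
    using lim1_AE AE_space
  proof eventually_elim
    case (elim x)
    then have x: "x \<in> space lam" and l1: "(\<lambda>k. T (Nsub k) (t_seq (Nsub k)) x / mu (Nsub k)) \<longlonglongrightarrow> 1" by auto
    have x': "x \<in> {0..<1}" using x by simp
    show "(\<lambda>n. T n (t_seq n) x / mu n) \<longlonglongrightarrow> 1"
    proof (rule interp[where N=Nsub])
      fix n n' :: nat assume "n \<le> n'"
      then show "T n (t_seq n) x \<le> T n' (t_seq n') x"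
        using S_mono[OF x' Kn_mono] T_eq by (metis \<open>n \<le> n'\<close>)
    next
      fix n n' :: nat assume "n \<le> n'"
      then show "mu n \<le> mu n'" by (rule mu_mono)
    next
      fix n show "T n (t_seq n) x \<ge> 0" using S_nonneg[OF x'] T_eq by metis
    next
      fix n assume "n \<ge> Nsub 0"
      then show "mu n > 0" using Nsub_ge9[of 0] by (intro mu_pos) linarith
    qed (use Nsub_mono Nsub_lim l1 ratio_lim in auto)
  qed
  then show ?thesis by (simp add: int_T)
qed


end
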